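(* There is a constant $C>0$ (independent of $N$ and $k$) such that for every $k\in\mathbb{Z}^2$, $$\hbar^2\sum_{p\in L_k}\lambda_{k,p}^{-1}\le C\log(N),$$ where $L_k=B_{\mathrm F}^c\cap(B_{\mathrm F}+k)$ and $\lambda_{k,p}=\frac12\hbar^2(|p|^2-|p-k|^2)$.
   Context: $N=|B_{\mathrm F}|$ with $B_{\mathrm F}=\{k\in\mathbb{Z}^2:|k|<k_{\mathrm F}\}$ for $k_{\mathrm F}>0$ with $k_{\mathrm F}^2=\frac12(\inf_{p\notin B_{\mathrm F}}|p|^2+\sup_{q\in B_{\mathrm F}}|q|^2)$; $B_{\mathrm F}^c=\mathbb{Z}^2\setminus B_{\mathrm F}$; $\hbar=N^{-1/2}$. (For $k=0$, $L_k=\emptyset$.) *)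

theory Defs
  imports Complex_Main
begin

definition sqnorm :: "int \<times> int \<Rightarrow> real" where
  "sqnorm p = real_of_int ((fst p)^2 + (snd p)^2)"

definition vdiff :: "int \<times> int \<Rightarrow> int \<times> int \<Rightarrow> int \<times> int" where
  "vdiff p q = (fst p - fst q, snd p - snd q)"

definition fermi_ball :: "real \<Rightarrow> (int \<times> int) set" where
  "fermi_ball kF = {k. sqrt (sqnorm k) < kF}"

definition admissible_kF :: "real \<Rightarrow> bool" where
  "admissible_kF kF \<longleftrightarrow> kF > 0 \<and>
     kF^2 = (Inf (sqnorm ` (UNIV - fermi_ball kF)) + Sup (sqnorm ` fermi_ball kF)) / 2"

definition Npart :: "real \<Rightarrow> nat" where
  "Npart kF = card (fermi_ball kF)"

definition hbar :: "real \<Rightarrow> real" where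
  "hbar kF = 1 / sqrt (real (Npart kF))"

definition Lset :: "real \<Rightarrow> int \<times> int \<Rightarrow> (int \<times> int) set" where
  "Lset kF k = {p. p \<notin> fermi_ball kF \<and> vdiff p k \<in> fermi_ball kF}"

definition lam :: "real \<Rightarrow> int \<times> int \<Rightarrow> int \<times> int \<Rightarrow> real" where
  "lam kF k p = (1/2) * (hbar kF)^2 * (sqnorm p - sqnorm (vdiff p k))"

end

theory Submission
  imports Defs
begin

lemma int_diam_card:
  fixes X :: "int set" and r :: real
  assumes r0: "0 \<le> r" and D: "\<And>x x'. x \<in> X \<Longrightarrow> x' \<in> X \<Longrightarrow> real_of_int (x' - x) \<le> r"
  shows "real (card X) \<le> r + 1"
proof (cases "X = {}")
  case True then show ?thesis using r0 by simp
next
  case False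
  then obtain x0 where x0: "x0 \<in> X" by blast
  have sub0: "X \<subseteq> {x0 - \<lfloor>r\<rfloor> .. x0 + \<lfloor>r\<rfloor>}"
  proof
    fix x assume "x \<in> X"
    then have "real_of_int (x - x0) \<le> r" "real_of_int (x0 - x) \<le> r" using D x0 by auto
    then have "x - x0 \<le> \<lfloor>r\<rfloor>" "x0 - x \<le> \<lfloor>r\<rfloor>" by linarith+
    then show "x \<in> {x0 - \<lfloor>r\<rfloor> .. x0 + \<lfloor>r\<rfloor>}" by simp
  qed
  then have fin: "finite X" using finite_subset by blast
  define m where "m = Min X"
  have mX: "m \<in> X" using fin False m_def by simp
  have sub: "X \<subseteq> {m .. m + \<lfloor>r\<rfloor>}"
  proof
    fix x assume xX: "x \<in> X"
    then have "m \<le> x" using fin m_def by simp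
    moreover have "real_of_int (x - m) \<le> r" using D mX xX by auto
    then have "x - m \<le> \<lfloor>r\<rfloor>" by linarith
    ultimately show "x \<in> {m .. m + \<lfloor>r\<rfloor>}" by simp
  qed
  have "card X \<le> card {m .. m + \<lfloor>r\<rfloor>}" using sub card_mono by blast
  also have "\<dots> = nat (\<lfloor>r\<rfloor> + 1)" by simp
  finally have "real (card X) \<le> real (nat (\<lfloor>r\<rfloor> + 1))" by linarith
  also have "\<dots> = real_of_int (\<lfloor>r\<rfloor> + 1)" using r0 by simp
  also have "\<dots> \<le> r + 1" by linarith
  finally show ?thesis .
qed

lemma slice_count:
  fixes P :: "'a set" and f h :: "'a \<Rightarrow> int" and g :: "'a \<Rightarrow> bool" and r s :: real
  assumes fin: "finite P" and inj: "inj_on (\<lambda>p. (f p, h p)) P" and r0: "0 \<le> r" and s0: "0 \<le> s"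
   and R: "\<And>p p'. p\<in>P \<Longrightarrow> p'\<in>P \<Longrightarrow> g p = g p' \<Longrightarrow> real_of_int (f p' - f p) \<le> r"
   and S: "\<And>p p'. p\<in>P \<Longrightarrow> p'\<in>P \<Longrightarrow> f p = f p' \<Longrightarrow> real_of_int (h p' - h p) \<le> s"
  shows "real (card P) \<le> 2 * (r+1) * (s+1)"
proof -
  have fib: "real (card {p\<in>P. f p = c}) \<le> s + 1" for c
  proof -
    have "inj_on h {p\<in>P. f p = c}"
      using inj unfolding inj_on_def by auto
    then have "card {p\<in>P. f p = c} = card (h ` {p\<in>P. f p = c})" by (simp add: card_image)
    moreover have "real (card (h ` {p\<in>P. f p = c})) \<le> s + 1"
      by (rule int_diam_card[OF s0]) (use S in auto)
    ultimately show ?thesis by simp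
  qed
  have img: "real (card (f ` P)) \<le> 2 * (r + 1)"
  proof -
    have "f ` P = f ` {p\<in>P. g p} \<union> f ` {p\<in>P. \<not> g p}" by auto
    then have "card (f ` P) \<le> card (f ` {p\<in>P. g p}) + card (f ` {p\<in>P. \<not> g p})"
      by (metis card_Un_le)
    then have "real (card (f ` P)) \<le> real (card (f ` {p\<in>P. g p})) + real (card (f ` {p\<in>P. \<not> g p}))"
      by (metis of_nat_add of_nat_mono)
    moreover have "real (card (f ` {p\<in>P. g p})) \<le> r + 1"
      by (rule int_diam_card[OF r0]) (use R in auto)
    moreover have "real (card (f ` {p\<in>P. \<not> g p})) \<le> r + 1"
      by (rule int_diam_card[OF r0]) (use R in auto)
    ultimately show ?thesis by (smt (verit))
  qed
  have "P = (\<Union>c\<in>f ` P. {p\<in>P. f p = c})" by auto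
  then have "card P = (\<Sum>c\<in>f ` P. card {p\<in>P. f p = c})"
  proof -
    have "card (\<Union>c\<in>f ` P. {p\<in>P. f p = c}) = (\<Sum>c\<in>f ` P. card {p\<in>P. f p = c})"
      by (rule card_UN_disjoint) (use fin in auto)
    then show ?thesis using \<open>P = _\<close> by simp
  qed
  then have "real (card P) = (\<Sum>c\<in>f ` P. real (card {p\<in>P. f p = c}))" by simp
  also have "\<dots> \<le> (\<Sum>c\<in>f ` P. s + 1)" by (rule sum_mono) (use fib in auto)
  also have "\<dots> = real (card (f ` P)) * (s + 1)" by simp
  also have "\<dots> \<le> 2 * (r + 1) * (s + 1)" using img s0 by (intro mult_right_mono) auto
  finally show ?thesis .
qed

lemma row_gap:
  fixes x x' a :: int
  assumes h1: "(x-a)^2 < x^2" and h2: "(x'-a)^2 < x'^2" and h3: "(x'-a)^2 < x^2" and h4: "(x-a)^2 < x'^2"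
  shows "x' - x < \<bar>a\<bar>"
proof -
  have e1: "a*(2*x - a) > 0" using h1 by (simp add: power2_eq_square algebra_simps)
  have e2: "a*(2*x' - a) > 0" using h2 by (simp add: power2_eq_square algebra_simps)
  consider "a > 0" | "a < 0" | "a = 0" by linarith
  then show ?thesis
  proof cases
    case 1
    then have "2*x - a > 0" using e1 zero_less_mult_pos by blast
    then have "x \<ge> 0" using 1 by linarith
    then have "x' - a < x" using h3 power2_less_imp_less by blast
    then show ?thesis using 1 by simp
  next
    case 2
    then have "2*x' - a < 0" using e2 by (simp add: zero_less_mult_iff)
    then have "-x' \<ge> 0" using 2 by linarith
    moreover have "(a - x)^2 < (-x')^2" using h4 by (simp add: power2_commute)
    ultimately have "a - x < -x'" using power2_less_imp_less by blast
    then show ?thesis using 2 by simp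
  next
    case 3 then show ?thesis using h1 by simp
  qed
qed

lemma spread:
  fixes x y x' y' a b d K u u' v v' n n' :: int
  assumes K: "K = a^2+b^2" and u: "u = a*x+b*y" and u': "u' = a*x'+b*y'"
   and v: "v = a*y - b*x" and v': "v' = a*y' - b*x'"
   and n: "n = x^2+y^2" and n': "n' = x'^2+y'^2"
   and D1: "1 \<le> 2*u - K" and D2: "2*u - K \<le> d" and D3: "1 \<le> 2*u' - K" and D4: "2*u' - K \<le> d"
   and N1: "n - n' \<le> d" and N2: "n' - n \<le> d" and sg: "(0 \<le> v) = (0 \<le> v')"
  shows "4*K*(y-y')^2 \<le> 3*d^2 + 6*K*d \<and> 4*K*(x-x')^2 \<le> 3*d^2 + 6*K*d"
proof -
  define du where "du = u - u'"
  define dv where "dv = v - v'"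
  have K0: "K \<ge> 0" using K by simp
  have d1: "d \<ge> 1" using D1 D2 by linarith
  have h1: "K*(y - y') = b*du + a*dv" unfolding K du_def dv_def u u' v v' by (simp add: power2_eq_square algebra_simps)
  have h2: "K*(x - x') = a*du - b*dv" unfolding K du_def dv_def u u' v v' by (simp add: power2_eq_square algebra_simps)
  have h3: "(b*du + a*dv)^2 + (a*du - b*dv)^2 = K*(du^2+dv^2)" unfolding K by (simp add: power2_eq_square algebra_simps)
  have sq1: "(b*du + a*dv)^2 \<le> K*(du^2+dv^2)" using h3 by (smt (verit) zero_le_power2)
  have sq2: "(a*du - b*dv)^2 \<le> K*(du^2+dv^2)" using h3 by (smt (verit) zero_le_power2)
  have adu: "\<bar>2*du\<bar> \<le> d" using D1 D2 D3 D4 unfolding du_def by (simp add: abs_le_iff)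
  have h4: "4*du^2 \<le> d^2"
  proof -
    have "(2*du)^2 \<le> d^2" using adu by (metis abs_le_square_iff abs_of_nonneg d1 order.trans zero_le_one abs_ge_zero power2_abs)
    then show ?thesis by (simp add: power2_eq_square)
  qed
  have h5: "dv^2 \<le> \<bar>v^2 - v'^2\<bar>"
  proof -
    have "\<bar>dv\<bar> \<le> \<bar>v + v'\<bar>" unfolding dv_def using sg by linarith
    then have "\<bar>dv\<bar> * \<bar>dv\<bar> \<le> \<bar>dv\<bar> * \<bar>v + v'\<bar>" by (rule mult_left_mono) auto
    moreover have "v^2 - v'^2 = dv * (v + v')" unfolding dv_def by (simp add: power2_eq_square algebra_simps)
    ultimately show ?thesis by (simp add: abs_mult power2_eq_square)
  qed
  have h6: "v^2 - v'^2 = K*(n - n') - du*(u+u')"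
    unfolding K n n' u u' v v' du_def by (simp add: power2_eq_square algebra_simps)
  have h8: "\<bar>K*(n-n')\<bar> \<le> K*d" using N1 N2 K0 by (simp add: abs_mult mult_left_mono)
  have h9: "4*\<bar>du*(u+u')\<bar> \<le> d*(2*K+2*d)"
  proof -
    have p: "0 \<le> 2*u+2*u'" "2*u+2*u' \<le> 2*K+2*d" using D1 D2 D3 D4 K0 by linarith+
    have "(2*du) * (2*u+2*u') = 4*(du*(u+u'))" by (simp add: algebra_simps)
    then have "4*\<bar>du*(u+u')\<bar> = \<bar>(2*du) * (2*u+2*u')\<bar>" by (simp only: abs_mult)
    also have "\<dots> = \<bar>2*du\<bar> * \<bar>2*u+2*u'\<bar>" by (rule abs_mult)
    also have "\<dots> \<le> d * (2*K+2*d)" using adu p by (intro mult_mono) auto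
    finally show ?thesis .
  qed
  have h10: "4*dv^2 \<le> 6*K*d + 2*d^2"
  proof -
    have "4*dv^2 \<le> 4*\<bar>K*(n-n')\<bar> + 4*\<bar>du*(u+u')\<bar>" using h5 h6 by linarith
    also have "\<dots> \<le> 4*K*d + d*(2*K+2*d)" using h8 h9 by linarith
    finally show ?thesis by (simp add: power2_eq_square algebra_simps)
  qed
  have key: "K*(4*du^2 + 4*dv^2) \<le> K*(3*d^2 + 6*K*d)"
    using h4 h10 K0 by (intro mult_left_mono) (auto simp: power2_eq_square)
  have fin: "4*K*z^2 \<le> 3*d^2 + 6*K*d" if z: "K*z = w" and w: "w^2 \<le> K*(du^2+dv^2)" for z w
  proof (cases "K = 0")
    case True then show ?thesis using d1 by simp
  next
    case False
    then have Kp: "K > 0" using K0 by simp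
    have "K*(4*K*z^2) = 4*(K*z)^2" by (simp add: power2_eq_square algebra_simps)
    also have "\<dots> \<le> 4*(K*(du^2+dv^2))" using z w by simp
    also have "\<dots> = K*(4*du^2+4*dv^2)" by (simp add: algebra_simps)
    also have "\<dots> \<le> K*(3*d^2 + 6*K*d)" by (rule key)
    finally show ?thesis using Kp by (simp add: mult_le_cancel_left)
  qed
  show ?thesis using fin[OF h1 sq1] fin[OF h2 sq2] by simp
qed

lemma final_num:
  fixes A d :: real
  assumes A1: "A \<ge> 1" and d1: "d \<ge> 1"
  shows "2*(sqrt(3*d^2/(4*A^2) + 3*d/2) + 1)*(min (A-1) ((d-1)/(2*A)) + 1) \<le> 12*d"
proof -
  define t where "t = sqrt d"
  have t1: "t \<ge> 1" using d1 t_def by simp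
  have dt: "d = t^2" using d1 t_def by simp
  define m where "m = min (A-1) ((d-1)/(2*A)) + 1"
  have mA: "m \<le> A" unfolding m_def by simp
  have "(d-1)/(2*A) \<le> d/(2*A)" using A1 by (intro divide_right_mono) auto
  then have md: "m \<le> d/(2*A) + 1" unfolding m_def by linarith
  have m1: "m \<ge> 1" unfolding m_def using A1 d1 by simp
  have r1: "sqrt(3*d^2/(4*A^2)) \<le> d/A"
  proof -
    have e: "3*d^2/(4*A^2) = 3/4 * (d/A)^2" by (simp add: power_divide)
    have "0 \<le> (d/A)^2" by simp
    then have "3*d^2/(4*A^2) \<le> (d/A)^2" unfolding e by linarith
    then have "sqrt(3*d^2/(4*A^2)) \<le> sqrt ((d/A)^2)" by (rule real_sqrt_le_mono)
    also have "\<dots> = d/A" using A1 d1 by simp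
    finally show ?thesis .
  qed
  have r2: "sqrt(3*d/2) \<le> 2*t"
  proof -
    have "sqrt(3*d/2) \<le> sqrt (4*d)" using d1 by simp
    also have "\<dots> = 2*t" unfolding t_def by (simp add: real_sqrt_mult)
    finally show ?thesis .
  qed
  have r: "sqrt(3*d^2/(4*A^2) + 3*d/2) \<le> d/A + 2*t"
    using sqrt_add_le_add_sqrt[of "3*d^2/(4*A^2)" "3*d/2"] r1 r2 d1 by simp
  have "(sqrt(3*d^2/(4*A^2) + 3*d/2) + 1) * m \<le> (d/A + 2*t + 1) * m"
    using r m1 by (intro mult_right_mono) auto
  also have "\<dots> = (d/A)*m + 2*t*m + m" by (simp add: algebra_simps)
  also have "\<dots> \<le> 6*d"
  proof -
    have a: "(d/A)*m \<le> d" using mA A1 d1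
      by (metis divide_pos_pos le_divide_eq_1_pos linorder_not_le mult.commute nonzero_mult_div_cancel_left order_less_le_trans times_divide_eq_right zero_less_one mult_le_cancel_left_pos order.refl)
    consider "A \<le> t" | "A > t" by linarith
    then have "2*t*m + m \<le> 5*d"
    proof cases
      case 1
      then have "m \<le> t" using mA by simp
      then have "2*t*m \<le> 2*t*t" "m \<le> d" using t1 dt by (auto simp: power2_eq_square) (smt (verit) mult_le_cancel_left1)
      then show ?thesis using dt m1 by (simp add: power2_eq_square)
    next
      case 2
      have "d/(2*A) \<le> t/2" using 2 t1 dt by (simp add: power2_eq_square divide_simps)
      then have mt: "m \<le> 3/2*t" using md t1 by simp
      then have "t*m \<le> t*(3/2*t)" using t1 by (intro mult_left_mono) auto
      also have "\<dots> = 3/2*d" using dt by (simp add: power2_eq_square)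
      finally have f1: "t*m \<le> 3/2*d" .
      have tt: "t \<le> t*t" using t1 by (simp add: mult_le_cancel_left1)
      have f2: "m \<le> 3/2*d" using mt tt dt by (simp add: power2_eq_square)
      have "2*t*m + m = 2*(t*m) + m" by simp
      then show ?thesis using f1 f2 d1 by linarith
    qed
    then show ?thesis using a by simp
  qed
  finally have "(sqrt(3*d^2/(4*A^2) + 3*d/2) + 1) * m \<le> 6*d" .
  then have "2*((sqrt(3*d^2/(4*A^2) + 3*d/2) + 1) * m) \<le> 12*d" by linarith
  then show ?thesis unfolding m_def by (simp only: mult.assoc)
qed

definition Pset :: "real \<Rightarrow> int \<Rightarrow> int \<Rightarrow> nat \<Rightarrow> (int \<times> int) set" where
  "Pset Q a b d = {p. Q \<le> real_of_int ((fst p)^2 + (snd p)^2) \<and>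
      real_of_int ((fst p - a)^2 + (snd p - b)^2) < Q \<and> 2*(a*fst p + b*snd p) - (a^2+b^2) \<le> int d}"

lemma abs_le_sq: "\<bar>z::int\<bar> \<le> z^2"
proof (cases "z = 0")
  case False
  then have "1 \<le> \<bar>z\<bar>" by linarith
  then have "\<bar>z\<bar> * 1 \<le> \<bar>z\<bar> * \<bar>z\<bar>" by (intro mult_left_mono) auto
  then show ?thesis by (simp add: power2_eq_square)
qed simp

lemma Pset_finite: "finite (Pset Q a b d)"
proof -
  define M where "M = \<lceil>Q\<rceil>"
  have "Pset Q a b d \<subseteq> {a - M .. a + M} \<times> {b - M .. b + M}"
  proof
    fix p assume "p \<in> Pset Q a b d"
    then have h: "real_of_int ((fst p - a)^2 + (snd p - b)^2) < Q" unfolding Pset_def by auto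
    have "\<bar>fst p - a\<bar> \<le> (fst p - a)^2" "\<bar>snd p - b\<bar> \<le> (snd p - b)^2"
      using abs_le_sq by auto
    then have "real_of_int \<bar>fst p - a\<bar> < Q" "real_of_int \<bar>snd p - b\<bar> < Q" using h
      by (smt (verit) of_int_add of_int_le_iff zero_le_power2)+
    then have "\<bar>fst p - a\<bar> \<le> M" "\<bar>snd p - b\<bar> \<le> M" unfolding M_def by linarith+
    then show "p \<in> {a - M .. a + M} \<times> {b - M .. b + M}" by (cases p) auto
  qed
  then show ?thesis using finite_subset by blast
qed

lemma Pset_props:
  assumes "p \<in> Pset Q a b d"
  shows "1 \<le> 2*(a*fst p + b*snd p) - (a^2+b^2)" "2*(a*fst p + b*snd p) - (a^2+b^2) \<le> int d"
    "Q \<le> real_of_int ((fst p)^2 + (snd p)^2)" "real_of_int ((fst p)^2 + (snd p)^2) < Q + real d"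
proof -
  obtain x y where p: "p = (x,y)" by (cases p)
  have e: "x^2 + y^2 - ((x-a)^2 + (y-b)^2) = 2*(a*x + b*y) - (a^2+b^2)"
    by (simp add: power2_eq_square algebra_simps)
  have h1: "Q \<le> real_of_int (x^2 + y^2)" and h2: "real_of_int ((x-a)^2+(y-b)^2) < Q"
    and h3: "2*(a*x + b*y) - (a^2+b^2) \<le> int d"
    using assms unfolding Pset_def p by auto
  have "(x-a)^2+(y-b)^2 < x^2 + y^2" using h1 h2 by linarith
  then show "1 \<le> 2*(a*fst p + b*snd p) - (a^2+b^2)" using e p by simp
  show "2*(a*fst p + b*snd p) - (a^2+b^2) \<le> int d" using h3 p by simp
  show "Q \<le> real_of_int ((fst p)^2 + (snd p)^2)" using h1 p by simp
  have "real_of_int (x^2 + y^2) = real_of_int ((x-a)^2+(y-b)^2) + real_of_int (2*(a*x + b*y) - (a^2+b^2))"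
    using e by (metis diff_add_cancel of_int_add add.commute)
  also have "\<dots> < Q + real d" using h2 h3 by (smt (verit) of_int_le_iff of_int_of_nat_eq)
  finally show "real_of_int ((fst p)^2 + (snd p)^2) < Q + real d" using p by simp
qed

lemma Pset_spread:
  assumes p: "p \<in> Pset Q a b d" and p': "p' \<in> Pset Q a b d"
    and sg: "(0 \<le> a*snd p - b*fst p) = (0 \<le> a*snd p' - b*fst p')"
  shows "4*(a^2+b^2)*(snd p - snd p')^2 \<le> 3*(int d)^2 + 6*(a^2+b^2)*(int d) \<and>
         4*(a^2+b^2)*(fst p - fst p')^2 \<le> 3*(int d)^2 + 6*(a^2+b^2)*(int d)"
proof -
  note P = Pset_props[OF p] and P' = Pset_props[OF p']
  have "real_of_int ((fst p)^2 + (snd p)^2) - real_of_int ((fst p')^2 + (snd p')^2) < real d"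
    using P(4) P'(3) by linarith
  then have N1: "((fst p)^2 + (snd p)^2) - ((fst p')^2 + (snd p')^2) \<le> int d" by linarith
  have "real_of_int ((fst p')^2 + (snd p')^2) - real_of_int ((fst p)^2 + (snd p)^2) < real d"
    using P'(4) P(3) by linarith
  then have N2: "((fst p')^2 + (snd p')^2) - ((fst p)^2 + (snd p)^2) \<le> int d" by linarith
  show ?thesis
    by (rule spread[OF refl refl refl refl refl refl refl P(1) P(2) P'(1) P'(2) N1 N2 sg])
qed

lemma spread_real:
  fixes z K a :: int and d :: nat
  assumes h: "4*K*z^2 \<le> 3*(int d)^2 + 6*K*int d" and aK: "a^2 \<le> K" and a0: "a \<noteq> 0"
  shows "real_of_int (\<bar>z\<bar>) \<le> sqrt(3*(real d)^2/(4*(real_of_int \<bar>a\<bar>)^2) + 3*real d/2)"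
proof -
  define Kr where "Kr = real_of_int K"
  define A where "A = real_of_int \<bar>a\<bar>"
  have A2: "A^2 = real_of_int (a^2)" unfolding A_def by simp
  have Apos: "A^2 > 0" using a0 A2 by simp
  have AK: "A^2 \<le> Kr" unfolding Kr_def A2 using aK by linarith
  have Kpos: "Kr > 0" using Apos AK by linarith
  have hr: "4*Kr*(real_of_int z)^2 \<le> 3*(real d)^2 + 6*Kr*real d"
  proof -
    have "real_of_int (4*K*z^2) \<le> real_of_int (3*(int d)^2 + 6*K*int d)" using h by (simp only: of_int_le_iff)
    then show ?thesis unfolding Kr_def by simp
  qed
  have "(real_of_int z)^2 \<le> (3*(real d)^2 + 6*Kr*real d)/(4*Kr)"
    using hr Kpos by (simp add: pos_le_divide_eq mult.commute)
  also have "\<dots> = 3*(real d)^2/(4*Kr) + 3*real d/2" using Kpos by (simp add: field_simps)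
  also have "3*(real d)^2/(4*Kr) \<le> 3*(real d)^2/(4*A^2)"
    using Apos AK Kpos by (intro divide_left_mono) (auto intro: mult_pos_pos)
  finally have "(real_of_int \<bar>z\<bar>)^2 \<le> 3*(real d)^2/(4*A^2) + 3*real d/2" by simp
  then show ?thesis unfolding A_def by (rule real_le_rsqrt)
qed

lemma lin_gap:
  fixes a w :: int and d :: nat
  assumes a0: "a \<noteq> 0" and h: "\<bar>2*a*w\<bar> \<le> int d - 1"
  shows "real_of_int w \<le> (real d - 1)/(2*real_of_int \<bar>a\<bar>)"
proof -
  have "2*\<bar>a\<bar>*\<bar>w\<bar> \<le> int d - 1" using h by (simp add: abs_mult)
  then have "2*real_of_int \<bar>a\<bar>*real_of_int \<bar>w\<bar> \<le> real d - 1"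
  proof -
    have "real_of_int (2*\<bar>a\<bar>*\<bar>w\<bar>) \<le> real_of_int (int d - 1)" using \<open>2*\<bar>a\<bar>*\<bar>w\<bar> \<le> int d - 1\<close> by (simp only: of_int_le_iff)
    then show ?thesis by simp
  qed
  then have "real_of_int \<bar>w\<bar> \<le> (real d - 1)/(2*real_of_int \<bar>a\<bar>)"
    using a0 by (simp add: pos_le_divide_eq mult.commute mult.left_commute)
  then show ?thesis by linarith
qed

lemma Pset_card:
  assumes d1: "d \<ge> 1"
  shows "real (card (Pset Q a b d)) \<le> 24 * real d"
proof -
  define P where "P = Pset Q a b d"
  define P1 where "P1 = {p \<in> P. Q \<le> real_of_int ((fst p)^2 + (snd p - b)^2)}"
  define P2 where "P2 = {p \<in> P. real_of_int ((fst p)^2 + (snd p - b)^2) < Q}"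
  have finP: "finite P" unfolding P_def by (rule Pset_finite)
  have PU: "P = P1 \<union> P2" unfolding P1_def P2_def by auto
  define g where "g = (\<lambda>p::int\<times>int. 0 \<le> a*snd p - b*fst p)"
  have c1: "real (card P1) \<le> 12 * real d"
  proof (cases "a = 0")
    case True
    have "P1 = {}"
    proof -
      have False if "p \<in> P1" for p
        using that True unfolding P1_def P_def Pset_def by auto
      then show ?thesis by blast
    qed
    then show ?thesis by simp
  next
    case False
    define r where "r = sqrt(3*(real d)^2/(4*(real_of_int \<bar>a\<bar>)^2) + 3*real d/2)"
    define s where "s = min (real_of_int \<bar>a\<bar> - 1) ((real d - 1)/(2*real_of_int \<bar>a\<bar>))"
    have "real (card P1) \<le> 2*(r+1)*(s+1)"
    proof (rule slice_count[where f=snd and h=fst and g=g])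
      show "finite P1" using finP unfolding P1_def by simp
      show "inj_on (\<lambda>p. (snd p, fst p)) P1" by (auto simp: inj_on_def prod_eq_iff)
      show "0 \<le> r" unfolding r_def by simp
      show "0 \<le> s" unfolding s_def using False d1 by auto
    next
      fix p p' assume pp: "p \<in> P1" "p' \<in> P1" "g p = g p'"
      then have "p \<in> Pset Q a b d" "p' \<in> Pset Q a b d" unfolding P1_def P_def by auto
      from Pset_spread[OF this] pp(3) have "4*(a^2+b^2)*(snd p - snd p')^2 \<le> 3*(int d)^2 + 6*(a^2+b^2)*(int d)"
        unfolding g_def by simp
      from spread_real[OF this _ False] have "real_of_int \<bar>snd p - snd p'\<bar> \<le> r" unfolding r_def by simp
      then show "real_of_int (snd p' - snd p) \<le> r" by linarith
    next
      fix p p' assume pp: "p \<in> P1" "p' \<in> P1" "snd p = snd p'"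
      obtain x y where p: "p = (x,y)" by (cases p)
      obtain x' where p': "p' = (x',y)" using pp(3) p by (cases p') auto
      have m: "p \<in> Pset Q a b d" "p' \<in> Pset Q a b d" using pp unfolding P1_def P_def by auto
      have i1: "Q \<le> real_of_int (x^2 + (y-b)^2)" "Q \<le> real_of_int (x'^2 + (y-b)^2)"
        using pp unfolding P1_def p p' by auto
      have i2: "real_of_int ((x-a)^2 + (y-b)^2) < Q" "real_of_int ((x'-a)^2 + (y-b)^2) < Q"
        using m unfolding Pset_def p p' by auto
      have "(x-a)^2 < x^2" "(x'-a)^2 < x'^2" "(x'-a)^2 < x^2" "(x-a)^2 < x'^2"
        using i1 i2 by linarith+
      then have g1: "x' - x < \<bar>a\<bar>" by (rule row_gap)
      have D: "1 \<le> 2*(a*x + b*y) - (a^2+b^2)" "2*(a*x + b*y) - (a^2+b^2) \<le> int d"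
        "1 \<le> 2*(a*x' + b*y) - (a^2+b^2)" "2*(a*x' + b*y) - (a^2+b^2) \<le> int d"
        using Pset_props[OF m(1)] Pset_props[OF m(2)] unfolding p p' by auto
      have "2*a*(x'-x) = (2*(a*x' + b*y) - (a^2+b^2)) - (2*(a*x + b*y) - (a^2+b^2))"
        by (simp add: algebra_simps)
      then have "\<bar>2*a*(x'-x)\<bar> \<le> int d - 1" using D by (simp only: abs_le_iff) linarith
      from lin_gap[OF False this] g1
      show "real_of_int (fst p' - fst p) \<le> s" unfolding s_def p p' by simp
    qed
    also have "\<dots> \<le> 12 * real d"
      unfolding r_def s_def using final_num[of "real_of_int \<bar>a\<bar>" "real d"] False d1 by simp
    finally show ?thesis .
  qed
  have c2: "real (card P2) \<le> 12 * real d"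
  proof (cases "b = 0")
    case True
    have "P2 = {}"
    proof -
      have False if "p \<in> P2" for p
        using that True unfolding P2_def P_def Pset_def by auto
      then show ?thesis by blast
    qed
    then show ?thesis by simp
  next
    case False
    define r where "r = sqrt(3*(real d)^2/(4*(real_of_int \<bar>b\<bar>)^2) + 3*real d/2)"
    define s where "s = min (real_of_int \<bar>b\<bar> - 1) ((real d - 1)/(2*real_of_int \<bar>b\<bar>))"
    have "real (card P2) \<le> 2*(r+1)*(s+1)"
    proof (rule slice_count[where f=fst and h=snd and g=g])
      show "finite P2" using finP unfolding P2_def by simp
      show "inj_on (\<lambda>p. (fst p, snd p)) P2" by (auto simp: inj_on_def prod_eq_iff)
      show "0 \<le> r" unfolding r_def by simp
      show "0 \<le> s" unfolding s_def using False d1 by auto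
    next
      fix p p' assume pp: "p \<in> P2" "p' \<in> P2" "g p = g p'"
      then have "p \<in> Pset Q a b d" "p' \<in> Pset Q a b d" unfolding P2_def P_def by auto
      from Pset_spread[OF this] pp(3) have "4*(a^2+b^2)*(fst p - fst p')^2 \<le> 3*(int d)^2 + 6*(a^2+b^2)*(int d)"
        unfolding g_def by simp
      from spread_real[OF this _ False] have "real_of_int \<bar>fst p - fst p'\<bar> \<le> r" unfolding r_def by simp
      then show "real_of_int (fst p' - fst p) \<le> r" by linarith
    next
      fix p p' assume pp: "p \<in> P2" "p' \<in> P2" "fst p = fst p'"
      obtain x y where p: "p = (x,y)" by (cases p)
      obtain y' where p': "p' = (x,y')" using pp(3) p by (cases p') auto
      have m: "p \<in> Pset Q a b d" "p' \<in> Pset Q a b d" using pp unfolding P2_def P_def by auto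
      have i1: "real_of_int (x^2 + (y-b)^2) < Q" "real_of_int (x^2 + (y'-b)^2) < Q"
        using pp unfolding P2_def p p' by auto
      have i2: "Q \<le> real_of_int (x^2 + y^2)" "Q \<le> real_of_int (x^2 + y'^2)"
        using m unfolding Pset_def p p' by auto
      have "(y-b)^2 < y^2" "(y'-b)^2 < y'^2" "(y'-b)^2 < y^2" "(y-b)^2 < y'^2"
        using i1 i2 by linarith+
      then have g1: "y' - y < \<bar>b\<bar>" by (rule row_gap)
      have D: "1 \<le> 2*(a*x + b*y) - (a^2+b^2)" "2*(a*x + b*y) - (a^2+b^2) \<le> int d"
        "1 \<le> 2*(a*x + b*y') - (a^2+b^2)" "2*(a*x + b*y') - (a^2+b^2) \<le> int d"
        using Pset_props[OF m(1)] Pset_props[OF m(2)] unfolding p p' by auto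
      have "2*b*(y'-y) = (2*(a*x + b*y') - (a^2+b^2)) - (2*(a*x + b*y) - (a^2+b^2))"
        by (simp add: algebra_simps)
      then have "\<bar>2*b*(y'-y)\<bar> \<le> int d - 1" using D by (simp only: abs_le_iff) linarith
      from lin_gap[OF False this] g1
      show "real_of_int (snd p' - snd p) \<le> s" unfolding s_def p p' by simp
    qed
    also have "\<dots> \<le> 12 * real d"
      unfolding r_def s_def using final_num[of "real_of_int \<bar>b\<bar>" "real d"] False d1 by simp
    finally show ?thesis .
  qed
  have "card P \<le> card P1 + card P2" unfolding PU by (rule card_Un_le)
  then have "real (card P) \<le> real (card P1) + real (card P2)" by (metis of_nat_add of_nat_mono)
  then show ?thesis using c1 c2 unfolding P_def by linarith
qed

lemma tele:
  fixes D M :: nat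
  assumes D1: "1 \<le> D" and DM: "D \<le> M"
  shows "(\<Sum>d\<in>{1..<M}. if D \<le> d then 1/(real d*(real d+1)) else 0) = 1/real D - 1/real M"
  using DM
proof (induction M rule: dec_induct)
  case base
  have "(\<Sum>d\<in>{1..<D}. if D \<le> d then 1/(real d*(real d+1)) else 0) = (\<Sum>d\<in>{1..<D}. 0)"
    by (rule sum.cong) auto
  then show ?case by simp
next
  case (step M)
  have M1: "M \<ge> 1" using step D1 by simp
  have "{1..<Suc M} = insert M {1..<M}" using M1 by auto
  then have "(\<Sum>d\<in>{1..<Suc M}. if D \<le> d then 1/(real d*(real d+1)) else 0)
      = 1/(real M*(real M+1)) + (\<Sum>d\<in>{1..<M}. if D \<le> d then 1/(real d*(real d+1)) else 0)"
    using step by simp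
  also have "\<dots> = 1/(real M*(real M+1)) + (1/real D - 1/real M)" using step by simp
  also have "\<dots> = 1/real D - 1/real (Suc M)"
  proof -
    have Mp: "real M > 0" using M1 by simp
    have "1/(real M*(real M+1)) = 1/real M - 1/(real M + 1)" using Mp by (simp add: field_simps)
    then show ?thesis by (simp add: add.commute)
  qed
  finally show ?case .
qed

lemma point_bound:
  fixes D M :: nat
  assumes D1: "1 \<le> D" and M1: "1 \<le> M"
  shows "1/real D \<le> (\<Sum>d\<in>{1..<M}. if D \<le> d then 1/(real d*(real d+1)) else 0) + 1/real M"
proof (cases "D \<le> M")
  case True then show ?thesis using tele[OF D1 True] by simp
next
  case False
  have "0 \<le> (\<Sum>d\<in>{1..<M}. if D \<le> d then 1/(real d*(real d+1)) else 0)"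
    by (rule sum_nonneg) auto
  moreover have "1/real D \<le> 1/real M" using False M1 by (simp add: frac_le)
  ultimately show ?thesis by linarith
qed

lemma abel:
  fixes L :: "'a set" and D :: "'a \<Rightarrow> nat" and M :: nat
  assumes fin: "finite L" and D1: "\<And>p. p \<in> L \<Longrightarrow> 1 \<le> D p" and M1: "1 \<le> M"
  shows "(\<Sum>p\<in>L. 1/real (D p)) \<le>
    (\<Sum>d\<in>{1..<M}. real (card {p\<in>L. D p \<le> d}) * (1/(real d*(real d+1)))) + real (card L)/real M"
proof -
  have "(\<Sum>p\<in>L. 1/real (D p)) \<le> (\<Sum>p\<in>L. (\<Sum>d\<in>{1..<M}. if D p \<le> d then 1/(real d*(real d+1)) else 0) + 1/real M)"
    by (rule sum_mono) (use point_bound D1 M1 in auto)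
  also have "\<dots> = (\<Sum>p\<in>L. \<Sum>d\<in>{1..<M}. if D p \<le> d then 1/(real d*(real d+1)) else 0) + real (card L)/real M"
    by (simp add: sum.distrib)
  also have "(\<Sum>p\<in>L. \<Sum>d\<in>{1..<M}. if D p \<le> d then 1/(real d*(real d+1)) else 0)
      = (\<Sum>d\<in>{1..<M}. \<Sum>p\<in>L. if D p \<le> d then 1/(real d*(real d+1)) else 0)"
    by (rule sum.swap)
  also have "\<dots> = (\<Sum>d\<in>{1..<M}. real (card {p\<in>L. D p \<le> d}) * (1/(real d*(real d+1))))"
  proof (rule sum.cong)
    fix d
    have "(\<Sum>p\<in>L. if D p \<le> d then 1/(real d*(real d+1)) else 0) = (\<Sum>p\<in>{p\<in>L. D p \<le> d}. 1/(real d*(real d+1)))"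
      by (rule sum.inter_filter[OF fin, symmetric])
    then show "(\<Sum>p\<in>L. if D p \<le> d then 1/(real d*(real d+1)) else 0) = real (card {p\<in>L. D p \<le> d}) * (1/(real d*(real d+1)))"
      by simp
  qed simp
  finally show ?thesis .
qed

lemma harm_ln:
  fixes M :: nat
  assumes "1 \<le> M"
  shows "(\<Sum>d\<in>{1..<M}. 1/(real d + 1)) \<le> ln (real M)"
  using assms
proof (induction M rule: dec_induct)
  case base then show ?case by simp
next
  case (step M)
  have "{1..<Suc M} = insert M {1..<M}" using step by auto
  then have "(\<Sum>d\<in>{1..<Suc M}. 1/(real d + 1)) = 1/(real M + 1) + (\<Sum>d\<in>{1..<M}. 1/(real d + 1))"
    by simp
  also have "\<dots> \<le> 1/(real M + 1) + ln (real M)" using step by simp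
  also have "\<dots> \<le> ln (real (Suc M))"
  proof -
    have Mp: "real M > 0" using step by simp
    have "ln (real M / (real M + 1)) \<le> real M / (real M + 1) - 1"
      using Mp by (intro ln_le_minus_one) auto
    moreover have "ln (real M / (real M + 1)) = ln (real M) - ln (real M + 1)"
      using Mp by (simp add: ln_div)
    moreover have "real M / (real M + 1) - 1 = - 1/(real M + 1)" using Mp by (simp add: field_simps)
    ultimately have "1/(real M + 1) + ln (real M) \<le> ln (real M + 1)" by linarith
    then show ?thesis by (simp add: add.commute)
  qed
  finally show ?case .
qed

theorem propositionA1:
  shows "\<exists>C>0. \<forall>kF k. admissible_kF kF \<and> Npart kF \<ge> 2 \<longrightarrow>
           (hbar kF)^2 * (\<Sum>p\<in>Lset kF k. 1 / lam kF k p) \<le> C * ln (real (Npart kF))"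
proof (intro exI[of _ 60] conjI allI impI)
  show "(0::real) < 60" by simp
  fix kF :: real and k :: "int \<times> int"
  assume H: "admissible_kF kF \<and> 2 \<le> Npart kF"
  define Q where "Q = kF^2"
  define N where "N = Npart kF"
  obtain a b where k: "k = (a,b)" by (cases k)
  have kF0: "kF > 0" using H unfolding admissible_kF_def by auto
  have N2: "N \<ge> 2" using H N_def by simp
  have Npos: "real N > 0" using N2 by simp
  have memB: "p \<in> fermi_ball kF \<longleftrightarrow> sqnorm p < Q" for p
  proof -
    have "kF = sqrt Q" unfolding Q_def using kF0 by simp
    then show ?thesis unfolding fermi_ball_def by simp
  qed
  have finB: "finite (fermi_ball kF)" using N2 unfolding N_def Npart_def by (intro card_ge_0_finite) simp
  define L where "L = Lset kF k"
  have Lchar: "p \<in> L \<longleftrightarrow> Q \<le> sqnorm p \<and> sqnorm (vdiff p k) < Q" for p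
    unfolding L_def Lset_def using memB by auto
  have LsubB: "L \<subseteq> (\<lambda>q. (fst q + a, snd q + b)) ` fermi_ball kF"
  proof
    fix p assume "p \<in> L"
    then have "vdiff p k \<in> fermi_ball kF" unfolding L_def Lset_def by auto
    moreover have "p = (fst (vdiff p k) + a, snd (vdiff p k) + b)" unfolding vdiff_def k by simp
    ultimately show "p \<in> (\<lambda>q. (fst q + a, snd q + b)) ` fermi_ball kF" by blast
  qed
  have finL: "finite L" using LsubB finB finite_surj by blast
  have cardL: "card L \<le> N"
  proof -
    have "card L \<le> card ((\<lambda>q. (fst q + a, snd q + b)) ` fermi_ball kF)" using LsubB finB by (intro card_mono) auto
    also have "\<dots> \<le> card (fermi_ball kF)" by (rule card_image_le[OF finB])
    finally show ?thesis unfolding N_def Npart_def .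
  qed
  define Dn where "Dn = (\<lambda>p::int\<times>int. nat (2*(a*fst p + b*snd p) - (a^2+b^2)))"
  have ident: "sqnorm p - sqnorm (vdiff p k) = real_of_int (2*(a*fst p + b*snd p) - (a^2+b^2))" for p
  proof -
    have "(fst p)^2 + (snd p)^2 - ((fst p - a)^2 + (snd p - b)^2) = 2*(a*fst p + b*snd p) - (a^2+b^2)"
      by (simp add: power2_eq_square algebra_simps)
    then show ?thesis unfolding sqnorm_def vdiff_def k
      by (metis fst_conv snd_conv of_int_diff)
  qed
  have Dprop: "1 \<le> Dn p \<and> real (Dn p) = sqnorm p - sqnorm (vdiff p k)
      \<and> 1 \<le> 2*(a*fst p + b*snd p) - (a^2+b^2)" if pL: "p \<in> L" for p
  proof -
    have "sqnorm (vdiff p k) < sqnorm p" using pL Lchar by fastforce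
    then have "real_of_int (2*(a*fst p + b*snd p) - (a^2+b^2)) > 0" using ident[of p] by linarith
    then have i: "1 \<le> 2*(a*fst p + b*snd p) - (a^2+b^2)" by linarith
    then show ?thesis unfolding Dn_def using ident[of p] by simp
  qed
  have hb: "(hbar kF)^2 = 1 / real N"
    unfolding hbar_def N_def using Npos N_def by (simp add: power_divide)
  have lamE: "1 / lam kF k p = 2 * real N * (1 / real (Dn p))" if "p \<in> L" for p
    unfolding lam_def hb using Dprop[OF that] Npos by (simp add: field_simps)
  have "(hbar kF)^2 * (\<Sum>p\<in>Lset kF k. 1 / lam kF k p) = (1/real N) * (\<Sum>p\<in>L. 2 * real N * (1 / real (Dn p)))"
    unfolding hb L_def[symmetric] by (simp add: lamE)
  also have "\<dots> = 2 * (\<Sum>p\<in>L. 1 / real (Dn p))"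
  proof -
    have "(\<Sum>p\<in>L. 2 * real N * (1 / real (Dn p))) = 2 * real N * (\<Sum>p\<in>L. 1 / real (Dn p))"
      by (rule sum_distrib_left[symmetric])
    then show ?thesis using Npos by simp
  qed
  also have "\<dots> \<le> 60 * ln (real N)"
  proof -
    have ab: "(\<Sum>p\<in>L. 1/real (Dn p)) \<le>
      (\<Sum>d\<in>{1..<N}. real (card {p\<in>L. Dn p \<le> d}) * (1/(real d*(real d+1)))) + real (card L)/real N"
      by (rule abel[OF finL]) (use Dprop N2 in auto)
    have termb: "real (card {p\<in>L. Dn p \<le> d}) * (1/(real d*(real d+1))) \<le> 24 * (1/(real d + 1))"
      if d: "d \<in> {1..<N}" for d
    proof -
      have d1: "d \<ge> 1" using d by simp
      have sub: "{p\<in>L. Dn p \<le> d} \<subseteq> Pset Q a b d"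
      proof
        fix p assume p: "p \<in> {p\<in>L. Dn p \<le> d}"
        then have pL: "p \<in> L" and pd: "Dn p \<le> d" by auto
        have "Q \<le> sqnorm p" "sqnorm (vdiff p k) < Q" using pL Lchar by auto
        moreover have "2*(a*fst p + b*snd p) - (a^2+b^2) \<le> int d"
          using pd Dprop[OF pL] unfolding Dn_def by linarith
        ultimately show "p \<in> Pset Q a b d"
          unfolding Pset_def sqnorm_def vdiff_def k by simp
      qed
      have "card {p\<in>L. Dn p \<le> d} \<le> card (Pset Q a b d)" using sub Pset_finite by (rule card_mono[rotated])
      then have "real (card {p\<in>L. Dn p \<le> d}) \<le> 24 * real d" using Pset_card[OF d1, of Q a b]
        by (meson of_nat_le_iff order_trans)
      then have "real (card {p\<in>L. Dn p \<le> d}) * (1/(real d*(real d+1))) \<le> 24 * real d * (1/(real d*(real d+1)))"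
        by (intro mult_right_mono) auto
      also have "\<dots> = 24 * (1/(real d + 1))"
      proof -
        have dp: "real d > 0" using d1 by simp
        have "real d * (1/(real d*(real d+1))) = 1/(real d + 1)" using dp by simp
        then show ?thesis by (metis mult.assoc)
      qed
      finally show ?thesis .
    qed
    have "(\<Sum>d\<in>{1..<N}. real (card {p\<in>L. Dn p \<le> d}) * (1/(real d*(real d+1)))) \<le> (\<Sum>d\<in>{1..<N}. 24 * (1/(real d + 1)))"
      by (rule sum_mono) (rule termb)
    also have "\<dots> = 24 * (\<Sum>d\<in>{1..<N}. 1/(real d + 1))" by (simp add: sum_distrib_left)
    also have "\<dots> \<le> 24 * ln (real N)" using harm_ln[of N] N2 by simp
    finally have s1: "(\<Sum>d\<in>{1..<N}. real (card {p\<in>L. Dn p \<le> d}) * (1/(real d*(real d+1)))) \<le> 24 * ln (real N)" .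
    have s2: "real (card L)/real N \<le> 1" using cardL Npos by simp
    have ln2: "ln (real N) \<ge> 1/2"
    proof -
      have "ln (1/real N) \<le> 1/real N - 1" using Npos by (intro ln_le_minus_one) auto
      moreover have "ln (1/real N) = - ln (real N)" using Npos by (simp add: ln_div)
      moreover have "1/real N \<le> 1/2" using N2 by simp
      ultimately show ?thesis by linarith
    qed
    show ?thesis using ab s1 s2 ln2 by linarith
  qed
  finally show "(hbar kF)^2 * (\<Sum>p\<in>Lset kF k. 1 / lam kF k p) \<le> 60 * ln (real (Npart kF))"
    unfolding N_def .
qed

end
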